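(* In the Banach space $\ell^\infty=(\ell^1)^*$ equipped with the weak$^*$ topology $\sigma(\ell^\infty,\ell^1)$, the set $A=\{e_1+e_n : n\in\mathbb{N}, n\ge 2\}$ is minimal but not topologically independent.
   Context: $e_i\in\ell^\infty$ denotes the sequence with $1$ in coordinate $i$ and $0$ elsewhere. A subset $A\subseteq X\setminus\{0\}$ of a topological vector space $X$ is topologically independent if for every neighborhood $W$ of $0$ there is a neighborhood $U$ of $0$ such that for every finite $F\subseteq A$ and integers $\{z_a: a\in F\}$, $\sum_{a\in F}z_a a\in U$ implies $z_a a\in W$ for all $a\in F$. $A$ is minimal if $a\notin\overline{\langle A\setminus\{a\}\rangle_{\mathbb{R}}}$ for every $a\in A$ (linear span, closure in $X$). *)

theory Defs
  imports "HOL-Analysis.Analysis"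
begin

text \<open>Sequences are modelled as functions nat => real; the paper's coordinate i (i >= 1)
  is stored at index i - 1 (so the paper's N = {1,2,...} is represented by nat via shift).\<close>

definition linf :: "(nat \<Rightarrow> real) set" where
  "linf = {x. bounded (range x)}"

definition lone :: "(nat \<Rightarrow> real) set" where
  "lone = {y. summable (\<lambda>k. \<bar>y k\<bar>)}"

definition pairing :: "(nat \<Rightarrow> real) \<Rightarrow> (nat \<Rightarrow> real) \<Rightarrow> real" where
  "pairing x y = (\<Sum>k. x k * y k)"

definition weak_star :: "(nat \<Rightarrow> real) topology" where
  "weak_star = topology_generated_by
     {{x \<in> linf. pairing x y \<in> V} | y V. y \<in> lone \<and> open V}"

text \<open>Unit vector e_i (paper's indexing, i >= 1): 1 at coordinate i, 0 elsewhere.\<close>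
definition unitv :: "nat \<Rightarrow> (nat \<Rightarrow> real)" where
  "unitv i = (\<lambda>k. if Suc k = i then 1 else 0)"

definition nhd0 :: "(nat \<Rightarrow> real) topology \<Rightarrow> (nat \<Rightarrow> real) set \<Rightarrow> bool" where
  "nhd0 T W \<longleftrightarrow> W \<subseteq> topspace T \<and> (\<exists>V. openin T V \<and> (\<lambda>k. 0) \<in> V \<and> V \<subseteq> W)"

definition top_indep :: "(nat \<Rightarrow> real) topology \<Rightarrow> (nat \<Rightarrow> real) set \<Rightarrow> bool" where
  "top_indep T A \<longleftrightarrow> A \<subseteq> topspace T - {(\<lambda>k. 0)} \<and>
     (\<forall>W. nhd0 T W \<longrightarrow> (\<exists>U. nhd0 T U \<and>
        (\<forall>F z. finite F \<and> F \<subseteq> A \<and> (\<lambda>k. \<Sum>a\<in>F. real_of_int (z a) * a k) \<in> U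
           \<longrightarrow> (\<forall>a\<in>F. (\<lambda>k. real_of_int (z a) * a k) \<in> W))))"

definition rspan :: "(nat \<Rightarrow> real) set \<Rightarrow> (nat \<Rightarrow> real) set" where
  "rspan S = {(\<lambda>k. \<Sum>a\<in>F. c a * a k) | F c. finite F \<and> F \<subseteq> S}"

definition minimal_set :: "(nat \<Rightarrow> real) topology \<Rightarrow> (nat \<Rightarrow> real) set \<Rightarrow> bool" where
  "minimal_set T A \<longleftrightarrow> (\<forall>a\<in>A. a \<notin> T closure_of (rspan (A - {a})))"

end

theory Submission
  imports Defs
begin

definition ev :: "nat \<Rightarrow> nat \<Rightarrow> real" where
  "ev j = (\<lambda>k. if k = j then 1 else 0)"

lemma pairing_ev: "pairing x (ev j) = x j"
proof -
  have "(\<lambda>k. x k * ev j k) = (\<lambda>k. if k = j then x k else 0)"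
    by (auto simp: ev_def)
  then show ?thesis unfolding pairing_def using sums_single[of j x]
    by (simp add: sums_unique[symmetric])
qed

lemma lone_ev: "ev j \<in> lone"
proof -
  have "(\<lambda>k. \<bar>ev j k\<bar>) = (\<lambda>k. if k = j then 1 else 0)" by (auto simp: ev_def)
  then show ?thesis unfolding lone_def using sums_single[of j "\<lambda>_. 1::real"]
    by (auto simp: sums_iff)
qed

lemma linf_fin: "range x \<subseteq> {-1,0,1,2} \<Longrightarrow> x \<in> linf"
proof -
  assume "range x \<subseteq> {-1,0,1,2}"
  moreover have "bounded ({-1,0,1,2}::real set)" by (rule finite_imp_bounded) simp
  ultimately show ?thesis unfolding linf_def using bounded_subset by blast
qed

lemma zero_linf: "(\<lambda>k. 0) \<in> linf"
  by (rule linf_fin) auto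

lemma pairing_zero: "pairing (\<lambda>k. 0) y = 0"
  unfolding pairing_def by simp

lemma topspace_ws: "topspace weak_star = linf"
proof -
  have "{x \<in> linf. pairing x (\<lambda>_. 0) \<in> UNIV} \<in> {{x \<in> linf. pairing x y \<in> V} | y V. y \<in> lone \<and> open V}"
    unfolding lone_def by (intro CollectI exI[of _ "\<lambda>_. 0"] exI[of _ UNIV]) simp
  then show ?thesis unfolding weak_star_def topology_generated_by_topspace by auto
qed

lemma open_basic: "y \<in> lone \<Longrightarrow> open V \<Longrightarrow> openin weak_star {x \<in> linf. pairing x y \<in> V}"
  unfolding weak_star_def openin_topology_generated_by_iff
  by (rule generate_topology_on.Basis) auto

lemma pairing_d:
  assumes "n \<ge> 1" "m \<ge> 1"
  shows "pairing (\<lambda>k. unitv n k - unitv m k) y = y (n-1) - y (m-1)"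
proof -
  have "(\<lambda>k. (unitv n k - unitv m k) * y k) =
        (\<lambda>k. (if k = n-1 then y k else 0) - (if k = m-1 then y k else 0))"
  proof (rule ext)
    fix k
    have "Suc k = n \<longleftrightarrow> k = n-1" "Suc k = m \<longleftrightarrow> k = m-1" using assms by auto
    then show "(unitv n k - unitv m k) * y k = (if k = n-1 then y k else 0) - (if k = m-1 then y k else 0)"
      unfolding unitv_def by auto
  qed
  moreover have "(\<lambda>k. (if k = n-1 then y k else 0) - (if k = m-1 then y k else 0)) sums (y (n-1) - y (m-1))"
    by (intro sums_diff sums_single)
  ultimately show ?thesis unfolding pairing_def by (simp add: sums_iff)
qed

lemma key:
  assumes "openin weak_star V" "(\<lambda>k. 0) \<in> V"
  shows "\<exists>N. \<forall>n\<ge>N. \<forall>m\<ge>N. (\<lambda>k. unitv n k - unitv m k) \<in> V"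
proof -
  have "generate_topology_on {{x \<in> linf. pairing x y \<in> V} | y V. y \<in> lone \<and> open V} V"
    using assms(1) unfolding weak_star_def openin_topology_generated_by_iff .
  then show ?thesis using assms(2)
  proof (induction rule: generate_topology_on.induct)
    case Empty then show ?case by simp
  next
    case (Int a b)
    then obtain N1 N2 where "\<forall>n\<ge>N1. \<forall>m\<ge>N1. (\<lambda>k. unitv n k - unitv m k) \<in> a"
      "\<forall>n\<ge>N2. \<forall>m\<ge>N2. (\<lambda>k. unitv n k - unitv m k) \<in> b" by auto
    then show ?case by (intro exI[of _ "max N1 N2"]) auto
  next
    case (UN K)
    then obtain k where "k \<in> K" "(\<lambda>k. 0) \<in> k" by auto
    with UN show ?case by blast
  next
    case (Basis s)
    then obtain y W where s: "s = {x \<in> linf. pairing x y \<in> W}" "y \<in> lone" "open W" by auto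
    with Basis have "0 \<in> W" by (auto simp: pairing_zero)
    then obtain e where e: "e > 0" "ball 0 e \<subseteq> W" using s(3) open_contains_ball by blast
    have "(\<lambda>k. \<bar>y k\<bar>) \<longlonglongrightarrow> 0" using s(2) unfolding lone_def by (intro summable_LIMSEQ_zero) simp
    then have "y \<longlonglongrightarrow> 0" by (simp add: tendsto_rabs_zero_iff)
    then obtain N0 where N0: "\<forall>k\<ge>N0. norm (y k - 0) < e/2"
      using e(1) LIMSEQ_D[of y 0 "e/2"] by auto
    show ?case
    proof (intro exI[of _ "Suc N0"] allI impI)
      fix n m :: nat assume nm: "Suc N0 \<le> n" "Suc N0 \<le> m"
      have p: "pairing (\<lambda>k. unitv n k - unitv m k) y = y (n-1) - y (m-1)"
        using nm by (intro pairing_d) auto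
      have "\<bar>y (n-1)\<bar> < e/2" "\<bar>y (m-1)\<bar> < e/2" using N0 nm by auto
      then have "y (n-1) - y (m-1) \<in> ball 0 e" by (auto simp: dist_real_def)
      moreover have "(\<lambda>k. unitv n k - unitv m k) \<in> linf"
        by (rule linf_fin) (auto simp: unitv_def split: if_splits)
      ultimately show "(\<lambda>k. unitv n k - unitv m k) \<in> s" using s(1) e(2) p by auto
    qed
  qed
qed

theorem mainTheorem14:
  shows "minimal_set weak_star {(\<lambda>k. unitv 1 k + unitv n k) | n. n \<ge> 2}
       \<and> \<not> top_indep weak_star {(\<lambda>k. unitv 1 k + unitv n k) | n. n \<ge> 2}"
proof
  let ?A = "{(\<lambda>k. unitv 1 k + unitv n k) | n. n \<ge> 2}"
  show "minimal_set weak_star ?A"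
    unfolding minimal_set_def
  proof
    fix a assume "a \<in> ?A"
    then obtain n where n: "n \<ge> 2" "a = (\<lambda>k. unitv 1 k + unitv n k)" by auto
    define Op where "Op = {x \<in> linf. pairing x (ev (n-1)) \<in> {1/2<..}}"
    have oO: "openin weak_star Op" unfolding Op_def by (intro open_basic lone_ev) auto
    have aO: "a \<in> Op" unfolding Op_def pairing_ev using n
      by (auto simp: unitv_def split: if_splits intro!: linf_fin)
    have disj: "x \<notin> Op" if "x \<in> rspan (?A - {a})" for x
    proof -
      from that obtain F c where F: "x = (\<lambda>k. \<Sum>b\<in>F. c b * b k)" "finite F" "F \<subseteq> ?A - {a}"
        unfolding rspan_def by auto
      have "\<forall>b\<in>F. b (n-1) = 0"
      proof
        fix b assume "b \<in> F"
        then obtain n' where "n' \<ge> 2" "b = (\<lambda>k. unitv 1 k + unitv n' k)" "b \<noteq> a" using F(3) by auto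
        then show "b (n-1) = 0" using n by (auto simp: unitv_def)
      qed
      then have "x (n-1) = 0" using F(1) by (simp add: sum.neutral)
      then show ?thesis unfolding Op_def pairing_ev by auto
    qed
    show "a \<notin> weak_star closure_of rspan (?A - {a})"
      unfolding in_closure_of using oO aO disj by blast
  qed
next
  let ?A = "{(\<lambda>k. unitv 1 k + unitv n k) | n. n \<ge> 2}"
  show "\<not> top_indep weak_star ?A"
  proof
    assume ti: "top_indep weak_star ?A"
    define W where "W = {x \<in> linf. pairing x (ev 0) \<in> {..<1/2}}"
    have oW: "openin weak_star W" unfolding W_def by (intro open_basic lone_ev) auto
    have "nhd0 weak_star W" unfolding nhd0_def
    proof (intro conjI exI[of _ W])
      show "W \<subseteq> topspace weak_star" unfolding topspace_ws W_def by auto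
      show "(\<lambda>k. 0) \<in> W" unfolding W_def pairing_ev by (auto simp: zero_linf)
    qed (use oW in auto)
    then obtain U where U: "nhd0 weak_star U" and
      P: "\<And>F z. finite F \<and> F \<subseteq> ?A \<and> (\<lambda>k. \<Sum>a\<in>F. real_of_int (z a) * a k) \<in> U
           \<Longrightarrow> (\<forall>a\<in>F. (\<lambda>k. real_of_int (z a) * a k) \<in> W)"
      using ti unfolding top_indep_def by blast
    then obtain V where V: "openin weak_star V" "(\<lambda>k. 0) \<in> V" "V \<subseteq> U" unfolding nhd0_def by auto
    obtain N where N: "\<forall>n\<ge>N. \<forall>m\<ge>N. (\<lambda>k. unitv n k - unitv m k) \<in> V" using key[OF V(1,2)] by auto
    define n where "n = max N 2"
    define an where "an = (\<lambda>k. unitv 1 k + unitv n k)"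
    define am where "am = (\<lambda>k. unitv 1 k + unitv (Suc n) k)"
    have ne: "an \<noteq> am"
    proof
      assume "an = am"
      then have "an (n-1) = am (n-1)" by simp
      moreover have n2: "n \<ge> 2" unfolding n_def by simp
      have "an (n-1) = 1" using n2 unfolding an_def unitv_def by simp
      moreover have "am (n-1) = 0" using n2 unfolding am_def unitv_def by simp
      ultimately show False by simp
    qed
    define z :: "(nat \<Rightarrow> real) \<Rightarrow> int" where "z = (\<lambda>a. if a = an then 1 else -1)"
    have n2: "n \<ge> 2" unfolding n_def by simp
    have sub: "{an, am} \<subseteq> ?A"
    proof -
      have "an \<in> ?A" unfolding an_def using n2 by blast
      moreover have "am \<in> ?A" unfolding am_def using n2 by (intro CollectI exI[of _ "Suc n"]) simp
      ultimately show ?thesis by blast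
    qed
    have za: "z an = 1" "z am = -1" using ne unfolding z_def by auto
    have "(\<lambda>k. \<Sum>a\<in>{an,am}. real_of_int (z a) * a k) = (\<lambda>k. an k - am k)"
    proof (rule ext)
      fix k show "(\<Sum>a\<in>{an,am}. real_of_int (z a) * a k) = an k - am k"
        using ne za by (simp add: sum.insert)
    qed
    also have "\<dots> = (\<lambda>k. unitv n k - unitv (Suc n) k)" unfolding an_def am_def by simp
    also have "\<dots> \<in> U"
    proof -
      have "n \<ge> N" unfolding n_def by simp
      then have "(\<lambda>k. unitv n k - unitv (Suc n) k) \<in> V" using N by simp
      then show ?thesis using V(3) by blast
    qed
    finally have "finite {an,am} \<and> {an,am} \<subseteq> ?A \<and> (\<lambda>k. \<Sum>a\<in>{an,am}. real_of_int (z a) * a k) \<in> U"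
      using sub by simp
    then have "\<forall>a\<in>{an,am}. (\<lambda>k. real_of_int (z a) * a k) \<in> W" by (rule P)
    then have "(\<lambda>k. real_of_int (z an) * an k) \<in> W" by blast
    then have "an \<in> W" using za by simp
    moreover have "an 0 = 1" unfolding an_def unitv_def using n2 by simp
    ultimately show False unfolding W_def pairing_ev by auto
  qed
qed

end
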